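(* Let $U\subset\mathbb R^n$ be open, $X$ a $C^1$ vector field on $U$, and $V:U\to\mathbb R$ a $C^2$ function satisfying A1, A2, and either A3 or A3$'$ (for A3$'$ assume $X,V$ are $C^\infty$). Then $V^{-1}(0)$ is uniformly asymptotically stable for the system $\dot x = X(x)-\nabla V(x)$.
   Context: (A1) $V\ge0$ on $U$, $V^{-1}(0)\ne\emptyset$, $\nabla V\cdot X=0$ on $U$. (A2) $c>0$ is such that $V^{-1}([0,c])$ is a compact subset of $U$. (A3) The set of critical points of $V$ in $V^{-1}([0,c])$ equals $V^{-1}(0)$. (A3$'$) With $X^0g=g$, $X^kg=X\cdot\nabla(X^{k-1}g)$ and $S=\{x\in U: X^k\partial V/\partial x^i(x)=0\ \forall k\ge0,\,1\le i\le n\}$, one has $S\cap V^{-1}([0,c])\subset V^{-1}(0)$. For nonempty compact $\Lambda\subset\mathbb R^n$, $\operatorname{dist}(x,\Lambda)=\inf_{a\in\Lambda}|x-a|$ and $S(\Lambda,r)=\{x:\operatorname{dist}(x,\Lambda)<r\}$. Let $x(t;x_0)$ be the solution with $x(0)=x_0$. $\Lambda$ is uniformly stable if for each $\epsilon>0$ there is $\delta>0$ with $x_0\in S(\Lambda,\delta),\ t\ge0\Rightarrow x(t;x_0)\in S(\Lambda,\epsilon)$. $\Lambda$ is uniformly asymptotically stable if it is positively invariant and uniformly stable and there is $\delta_0>0$ and for each $\epsilon>0$ a $T(\epsilon)>0$ with $x_0\in S(\Lambda,\delta_0),\ t\ge T(\epsilon)\Rightarrow x(t;x_0)\in S(\Lambda,\epsilon)$.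 *)

theory Defs
  imports "HOL-Analysis.Analysis"
begin

text \<open>Partial derivative of f in the direction of the basis vector i (well defined when f is
  differentiable at x).\<close>
definition pderiv_at :: "('a::euclidean_space \<Rightarrow> 'b::real_normed_vector) \<Rightarrow> 'a \<Rightarrow> 'a \<Rightarrow> 'b" where
  "pderiv_at f i x = frechet_derivative f (at x) i"

fun Ck_on :: "nat \<Rightarrow> 'a::euclidean_space set \<Rightarrow> ('a \<Rightarrow> 'b::real_normed_vector) \<Rightarrow> bool" where
  "Ck_on 0 U f = continuous_on U f"
| "Ck_on (Suc k) U f =
     ((\<forall>x\<in>U. f differentiable (at x)) \<and> (\<forall>i\<in>Basis. Ck_on k U (\<lambda>x. pderiv_at f i x)))"

definition smooth_on :: "'a::euclidean_space set \<Rightarrow> ('a \<Rightarrow> 'b::real_normed_vector) \<Rightarrow> bool" where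
  "smooth_on U f = (\<forall>k. Ck_on k U f)"

definition grad :: "('a::euclidean_space \<Rightarrow> real) \<Rightarrow> 'a \<Rightarrow> 'a" where
  "grad V x = (\<Sum>i\<in>Basis. pderiv_at V i x *\<^sub>R i)"

fun lie_iter :: "('a::euclidean_space \<Rightarrow> 'a) \<Rightarrow> nat \<Rightarrow> ('a \<Rightarrow> real) \<Rightarrow> 'a \<Rightarrow> real" where
  "lie_iter X 0 g = g"
| "lie_iter X (Suc k) g = (\<lambda>x. X x \<bullet> grad (lie_iter X k g) x)"

definition nbhd :: "'a::euclidean_space set \<Rightarrow> real \<Rightarrow> 'a set" where
  "nbhd L r = {x. infdist x L < r}"

definition is_solution :: "'a::euclidean_space set \<Rightarrow> ('a \<Rightarrow> 'a) \<Rightarrow> 'a \<Rightarrow> (real \<Rightarrow> 'a) \<Rightarrow> bool" where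
  "is_solution U F x0 x \<longleftrightarrow> x 0 = x0 \<and>
     (\<forall>t\<ge>0. x t \<in> U \<and> (x has_vector_derivative F (x t)) (at t within {0..}))"

definition pos_invariant :: "'a::euclidean_space set \<Rightarrow> ('a \<Rightarrow> 'a) \<Rightarrow> 'a set \<Rightarrow> bool" where
  "pos_invariant U F L \<longleftrightarrow>
     (\<forall>x0\<in>L. (\<exists>x. is_solution U F x0 x) \<and> (\<forall>x. is_solution U F x0 x \<longrightarrow> (\<forall>t\<ge>0. x t \<in> L)))"

definition unif_stable :: "'a::euclidean_space set \<Rightarrow> ('a \<Rightarrow> 'a) \<Rightarrow> 'a set \<Rightarrow> bool" where
  "unif_stable U F L \<longleftrightarrow>
     (\<forall>\<epsilon>>0. \<exists>\<delta>>0. \<forall>x0\<in>nbhd L \<delta>. (\<exists>x. is_solution U F x0 x) \<and>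
        (\<forall>x. is_solution U F x0 x \<longrightarrow> (\<forall>t\<ge>0. x t \<in> nbhd L \<epsilon>)))"

definition unif_asym_stable :: "'a::euclidean_space set \<Rightarrow> ('a \<Rightarrow> 'a) \<Rightarrow> 'a set \<Rightarrow> bool" where
  "unif_asym_stable U F L \<longleftrightarrow> pos_invariant U F L \<and> unif_stable U F L \<and>
     (\<exists>\<delta>0>0. (\<forall>x0\<in>nbhd L \<delta>0. \<exists>x. is_solution U F x0 x) \<and>
        (\<forall>\<epsilon>>0. \<exists>T>0. \<forall>x0\<in>nbhd L \<delta>0. \<forall>x. is_solution U F x0 x \<longrightarrow>
            (\<forall>t\<ge>T. x t \<in> nbhd L \<epsilon>)))"

end

theory Submission
  imports Defs
begin

lemma pd_expand:
  assumes "f differentiable (at x)"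
  shows "(f has_derivative (\<lambda>h. \<Sum>i\<in>Basis. (h \<bullet> i) *\<^sub>R pderiv_at f i x)) (at x)"
proof -
  have D: "(f has_derivative frechet_derivative f (at x)) (at x)"
    using assms frechet_derivative_works by blast
  have lin: "linear (frechet_derivative f (at x))" using D has_derivative_linear by blast
  have "frechet_derivative f (at x) = (\<lambda>h. \<Sum>i\<in>Basis. (h \<bullet> i) *\<^sub>R pderiv_at f i x)"
  proof
    fix h
    have "frechet_derivative f (at x) h = frechet_derivative f (at x) (\<Sum>i\<in>Basis. (h \<bullet> i) *\<^sub>R i)"
      by (simp add: euclidean_representation)
    also have "\<dots> = (\<Sum>i\<in>Basis. (h \<bullet> i) *\<^sub>R frechet_derivative f (at x) i)"
      by (simp add: linear_sum[OF lin] linear_cmul[OF lin])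
    finally show "frechet_derivative f (at x) h = (\<Sum>i\<in>Basis. (h \<bullet> i) *\<^sub>R pderiv_at f i x)"
      by (simp add: pderiv_at_def)
  qed
  with D show ?thesis by simp
qed

lemma grad_deriv:
  fixes f :: "'a::euclidean_space \<Rightarrow> real"
  assumes "f differentiable (at x)"
  shows "(f has_derivative (\<lambda>h. h \<bullet> grad f x)) (at x)"
proof -
  have "(\<lambda>h. \<Sum>i\<in>Basis. (h \<bullet> i) *\<^sub>R pderiv_at f i x) = (\<lambda>h. h \<bullet> grad f x)"
    by (auto simp: grad_def inner_sum_right mult.commute)
  with pd_expand[OF assms] show ?thesis by simp
qed

lemma pd_eq:
  "(f has_derivative D) (at x) \<Longrightarrow> pderiv_at f i x = D i"
  using frechet_derivative_at pderiv_at_def by metis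

lemma pd_cong:
  assumes "open U" "x \<in> U" "\<And>y. y \<in> U \<Longrightarrow> f y = g y" "f differentiable (at x)"
  shows "pderiv_at f i x = pderiv_at g i x" "g differentiable (at x)"
proof -
  have D: "(f has_derivative frechet_derivative f (at x)) (at x)"
    using assms frechet_derivative_works by blast
  have D2: "(g has_derivative frechet_derivative f (at x)) (at x)"
    by (rule has_derivative_transform_within_open[OF D assms(1,2)]) (use assms in auto)
  show "pderiv_at f i x = pderiv_at g i x" using pd_eq[OF D] pd_eq[OF D2] by simp
  show "g differentiable (at x)" using D2 differentiable_def by blast
qed

lemma Ck_on_cong:
  fixes f g :: "'a::euclidean_space \<Rightarrow> 'b::real_normed_vector"
  assumes "open U" "\<And>x. x \<in> U \<Longrightarrow> f x = g x"
  shows "Ck_on k U f = Ck_on k U g"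
  using assms(2)
proof (induction k arbitrary: f g)
  case 0
  have "continuous_on U f = continuous_on U g" by (rule continuous_on_cong) (use 0 in auto)
  then show ?case by simp
next
  case (Suc k)
  have *: "Ck_on (Suc k) U g" if f: "Ck_on (Suc k) U f" and fg: "\<And>x. x \<in> U \<Longrightarrow> f x = g x" for f g :: "'a \<Rightarrow> 'b"
  proof -
    have d: "\<forall>x\<in>U. f differentiable (at x)" using that by simp
    have "\<forall>x\<in>U. g differentiable (at x)"
    proof
      fix x assume "x \<in> U"
      then show "g differentiable (at x)" using pd_cong(2)[of U x f g] assms(1) fg d by blast
    qed
    moreover have "Ck_on k U (\<lambda>x. pderiv_at g i x)" if i: "i \<in> Basis" for i
    proof -
      have "Ck_on k U (\<lambda>x. pderiv_at f i x)" using \<open>Ck_on (Suc k) U f\<close> i by simp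
      moreover have "\<And>x. x \<in> U \<Longrightarrow> pderiv_at f i x = pderiv_at g i x"
        using pd_cong(1)[of U _ f g] assms(1) fg d by blast
      ultimately show ?thesis using Suc.IH[of "\<lambda>x. pderiv_at f i x" "\<lambda>x. pderiv_at g i x"] by blast
    qed
    ultimately show ?thesis by simp
  qed
  have **: "\<And>x. x \<in> U \<Longrightarrow> g x = f x" using Suc.prems by simp
  show ?case
  proof
    assume "Ck_on (Suc k) U f" then show "Ck_on (Suc k) U g" by (rule *) (use Suc.prems in simp)
  next
    assume "Ck_on (Suc k) U g" then show "Ck_on (Suc k) U f" by (rule *) (use ** in simp)
  qed
qed

lemma Ck_on_mono:
  assumes "open U" "Ck_on (Suc k) U f"
  shows "Ck_on k U f"
  using assms(2)
proof (induction k arbitrary: f)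
  case 0
  then show ?case
    by (auto intro!: continuous_at_imp_continuous_on differentiable_imp_continuous_within)
next
  case (Suc k)
  have d: "\<forall>x\<in>U. f differentiable (at x)" using Suc.prems Ck_on.simps(2)[of "Suc k" U f] by blast
  have "\<forall>i\<in>Basis. Ck_on (Suc k) U (\<lambda>x. pderiv_at f i x)" using Suc.prems Ck_on.simps(2)[of "Suc k" U f] by blast
  then have "\<forall>i\<in>Basis. Ck_on k U (\<lambda>x. pderiv_at f i x)" using Suc.IH by blast
  then show ?case using d Ck_on.simps(2)[of k U f] by blast
qed

lemma Ck_on_const:
  fixes U :: "'a::euclidean_space set" and c :: "'b::real_normed_vector"
  shows "Ck_on k U (\<lambda>x. c)"
proof (induction k arbitrary: c)
  case 0
  then show ?case by simp
next
  case (Suc k)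
  have "pderiv_at (\<lambda>x::'a. c) i = (\<lambda>x. 0)" for i
    by (rule ext) (metis pd_eq has_derivative_const)
  then show ?case using Suc.IH by simp
qed

lemma fd_works: "f differentiable (at x) \<Longrightarrow> (f has_derivative frechet_derivative f (at x)) (at x)"
  using frechet_derivative_works by blast

lemma Ck_on_add:
  assumes "open U"
  shows "Ck_on k U f \<Longrightarrow> Ck_on k U g \<Longrightarrow> Ck_on k U (\<lambda>x. f x + g x)"
proof (induction k arbitrary: f g)
  case 0
  then show ?case by (simp add: continuous_on_add)
next
  case (Suc k)
  have df: "\<forall>x\<in>U. f differentiable (at x)" and dg: "\<forall>x\<in>U. g differentiable (at x)"
    using Suc.prems by auto
  have pd: "pderiv_at (\<lambda>x. f x + g x) i x = pderiv_at f i x + pderiv_at g i x" if "x \<in> U" for i x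
  proof -
    have Df: "(f has_derivative frechet_derivative f (at x)) (at x)" using df that fd_works by blast
    have Dg: "(g has_derivative frechet_derivative g (at x)) (at x)" using dg that fd_works by blast
    show ?thesis using pd_eq[OF has_derivative_add[OF Df Dg]] by (simp add: pderiv_at_def)
  qed
  have "\<forall>x\<in>U. (\<lambda>x. f x + g x) differentiable (at x)" using df dg by auto
  moreover have "Ck_on k U (\<lambda>x. pderiv_at (\<lambda>x. f x + g x) i x)" if "i \<in> Basis" for i
  proof -
    have "Ck_on k U (\<lambda>x. pderiv_at f i x + pderiv_at g i x)"
      using Suc.IH Suc.prems that by simp
    then show ?thesis using Ck_on_cong[OF assms, of "\<lambda>x. pderiv_at (\<lambda>x. f x + g x) i x"] pd by auto
  qed
  ultimately show ?case by simp
qed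

lemma Ck_on_bilinear:
  assumes "open U" "bounded_bilinear pr"
  shows "Ck_on k U f \<Longrightarrow> Ck_on k U g \<Longrightarrow> Ck_on k U (\<lambda>x. pr (f x) (g x))"
proof (induction k arbitrary: f g)
  case 0
  then show ?case using bounded_bilinear.continuous_on[OF assms(2)] by simp
next
  case (Suc k)
  have df: "\<forall>x\<in>U. f differentiable (at x)" and dg: "\<forall>x\<in>U. g differentiable (at x)"
    using Suc.prems by auto
  have pd: "pderiv_at (\<lambda>x. pr (f x) (g x)) i x = pr (f x) (pderiv_at g i x) + pr (pderiv_at f i x) (g x)"
    if "x \<in> U" for i x
  proof -
    have Df: "(f has_derivative frechet_derivative f (at x)) (at x)" using df that fd_works by blast
    have Dg: "(g has_derivative frechet_derivative g (at x)) (at x)" using dg that fd_works by blast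
    show ?thesis using pd_eq[OF bounded_bilinear.FDERIV[OF assms(2) Df Dg]] by (simp add: pderiv_at_def)
  qed
  have "\<forall>x\<in>U. (\<lambda>x. pr (f x) (g x)) differentiable (at x)"
  proof
    fix x assume "x \<in> U"
    then have Df: "(f has_derivative frechet_derivative f (at x)) (at x)"
      and Dg: "(g has_derivative frechet_derivative g (at x)) (at x)" using df dg fd_works by blast+
    show "(\<lambda>x. pr (f x) (g x)) differentiable (at x)"
      using bounded_bilinear.FDERIV[OF assms(2) Df Dg] differentiable_def by blast
  qed
  moreover have "Ck_on k U (\<lambda>x. pderiv_at (\<lambda>x. pr (f x) (g x)) i x)" if "i \<in> Basis" for i
  proof -
    have "Ck_on k U f" "Ck_on k U g" using Ck_on_mono[OF assms(1)] Suc.prems by auto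
    moreover have "Ck_on k U (\<lambda>x. pderiv_at f i x)" "Ck_on k U (\<lambda>x. pderiv_at g i x)"
      using Suc.prems that by auto
    ultimately have "Ck_on k U (\<lambda>x. pr (f x) (pderiv_at g i x) + pr (pderiv_at f i x) (g x))"
      using Suc.IH Ck_on_add[OF assms(1)] by blast
    then show ?thesis using Ck_on_cong[OF assms(1), of "\<lambda>x. pderiv_at (\<lambda>x. pr (f x) (g x)) i x"] pd by auto
  qed
  ultimately show ?case by simp
qed

lemma Ck_on_sum:
  assumes "open U" "finite S"
  shows "(\<And>j. j \<in> S \<Longrightarrow> Ck_on k U (f j)) \<Longrightarrow> Ck_on k U (\<lambda>x. \<Sum>j\<in>S. f j x)"
  using assms(2)
proof (induction S rule: finite_induct)
  case empty
  then show ?case using Ck_on_const by simp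
next
  case (insert a S)
  then show ?case using Ck_on_add[OF assms(1), of k "f a" "\<lambda>x. \<Sum>j\<in>S. f j x"] by simp
qed

lemma cont_bound:
  assumes "compact S" "continuous_on S g"
  obtains M where "M \<ge> 0" "\<And>x. x \<in> S \<Longrightarrow> norm (g x) \<le> M"
proof -
  have "bounded (g ` S)" using compact_continuous_image[OF assms(2,1)] compact_imp_bounded by blast
  then obtain M where "\<forall>y\<in>g ` S. norm y \<le> M" by (auto simp: bounded_iff)
  then show ?thesis using that[of "max M 0"] by fastforce
qed

lemma compact_ball_cover:
  assumes "compact K" "open U" "K \<subseteq> U"
  obtains e where "e > 0" "\<And>a. a \<in> K \<Longrightarrow> ball a e \<subseteq> U"
proof -
  obtain e where "0 < e" "\<And>x. x \<in> K \<Longrightarrow> \<exists>G \<in> {U}. ball x e \<subseteq> G"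
    using Heine_Borel_lemma[OF assms(1), of "{U}"] assms by auto
  then show ?thesis using that by blast
qed

lemma compact_thicken:
  fixes K :: "'a::euclidean_space set"
  assumes "compact K" "K \<noteq> {}" "r \<ge> 0"
  shows "compact {y. infdist y K \<le> r}"
proof -
  have cl: "closed {y. infdist y K \<le> r}"
    by (intro closed_Collect_le continuous_intros continuous_on_id)
  obtain B where B: "\<And>a. a \<in> K \<Longrightarrow> norm a \<le> B"
    using compact_imp_bounded[OF assms(1)] by (auto simp: bounded_iff)
  have "norm y \<le> B + r" if "infdist y K \<le> r" for y
  proof -
    obtain a where a: "a \<in> K" "infdist y K = dist y a"
      using infdist_attains_inf[OF compact_imp_closed[OF assms(1)] assms(2)] by blast
    have "norm y \<le> norm a + dist y a" by (metis dist_norm norm_triangle_sub add.commute)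
    then show ?thesis using B[OF a(1)] a that by linarith
  qed
  then have "bounded {y. infdist y K \<le> r}" by (auto simp: bounded_iff)
  then show ?thesis using cl compact_eq_bounded_closed by blast
qed

lemma C1_lipschitz:
  fixes f :: "'a::euclidean_space \<Rightarrow> 'b::real_normed_vector"
  assumes "open U" "Ck_on 1 U f" "compact K" "K \<subseteq> U"
  obtains L where "L > 0" "\<And>a b. a \<in> K \<Longrightarrow> b \<in> K \<Longrightarrow> norm (f a - f b) \<le> L * norm (a - b)"
proof (cases "K = {}")
  case True
  then show ?thesis using that[of 1] by auto
next
  case False
  obtain e where e: "e > 0" "\<And>a. a \<in> K \<Longrightarrow> ball a e \<subseteq> U"
    using compact_ball_cover[OF assms(3,1,4)] by blast
  define r where "r = e / 2"
  have r: "r > 0" "r < e" using e by (auto simp: r_def)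
  define K' where "K' = {y. infdist y K \<le> r}"
  have cK': "compact K'" unfolding K'_def using compact_thicken[OF assms(3) False] r by simp
  have K'U: "K' \<subseteq> U"
  proof
    fix y assume "y \<in> K'"
    obtain a where a: "a \<in> K" "infdist y K = dist y a"
      using infdist_attains_inf[OF compact_imp_closed[OF assms(3)] False] by blast
    then have "dist a y < e" using \<open>y \<in> K'\<close> r by (simp add: K'_def dist_commute)
    then show "y \<in> U" using e(2)[OF a(1)] by auto
  qed
  have diff: "\<forall>x\<in>U. f differentiable (at x)" using assms(2) by simp
  have pdc: "continuous_on U (\<lambda>x. pderiv_at f i x)" if "i \<in> Basis" for i
    using assms(2) that by simp
  have "continuous_on K' (\<lambda>y. \<Sum>i\<in>Basis. norm (pderiv_at f i y))"
    by (intro continuous_intros continuous_on_subset[OF pdc K'U]) auto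
  then obtain M where M: "M \<ge> 0" "\<And>y. y \<in> K' \<Longrightarrow> norm (\<Sum>i\<in>Basis. norm (pderiv_at f i y)) \<le> M"
    using cont_bound[OF cK'] by blast
  have M': "(\<Sum>i\<in>Basis. norm (pderiv_at f i y)) \<le> M" if "y \<in> K'" for y
    using M(2)[OF that] by simp
  have contf: "continuous_on K f"
    using Ck_on_mono[OF assms(1) assms(2)[unfolded One_nat_def]] continuous_on_subset[OF _ assms(4)] by simp
  obtain M0 where M0: "M0 \<ge> 0" "\<And>a. a \<in> K \<Longrightarrow> norm (f a) \<le> M0"
    using cont_bound[OF assms(3) contf] by blast
  define L where "L = max M (2 * M0 / r) + 1"
  have L: "L > 0" using M by (simp add: L_def max_def)
  have "norm (f a - f b) \<le> L * norm (a - b)" if ab: "a \<in> K" "b \<in> K" for a b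
  proof (cases "norm (a - b) \<le> r")
    case True
    have segK: "closed_segment a b \<subseteq> K'"
    proof
      fix z assume z: "z \<in> closed_segment a b"
      have "infdist z K \<le> dist z a" using infdist_le[OF ab(1)] by simp
      also have "\<dots> \<le> dist a b" using dist_in_closed_segment[OF z] by simp
      finally show "z \<in> K'" using True by (simp add: K'_def dist_norm)
    qed
    have "norm (f a - f b) \<le> M * norm (a - b)"
    proof (rule differentiable_bound[OF convex_closed_segment])
      fix z assume z: "z \<in> closed_segment a b"
      then have zU: "z \<in> U" using segK K'U by auto
      show "(f has_derivative (\<lambda>h. \<Sum>i\<in>Basis. (h \<bullet> i) *\<^sub>R pderiv_at f i z)) (at z within closed_segment a b)"
        using pd_expand[of f z] diff zU has_derivative_at_withinI by blast
      show "onorm (\<lambda>h. \<Sum>i\<in>Basis. (h \<bullet> i) *\<^sub>R pderiv_at f i z) \<le> M"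
      proof (rule onorm_bound[OF M(1)])
        fix h
        have "norm (\<Sum>i\<in>Basis. (h \<bullet> i) *\<^sub>R pderiv_at f i z) \<le> (\<Sum>i\<in>Basis. norm ((h \<bullet> i) *\<^sub>R pderiv_at f i z))"
          by (rule norm_sum)
        also have "\<dots> \<le> (\<Sum>i\<in>Basis. norm h * norm (pderiv_at f i z))"
          by (intro sum_mono) (auto intro: mult_right_mono Basis_le_norm)
        also have "\<dots> = norm h * (\<Sum>i\<in>Basis. norm (pderiv_at f i z))" by (simp add: sum_distrib_left)
        also have "\<dots> \<le> norm h * M" using M'[of z] z segK by (intro mult_left_mono) auto
        finally show "norm (\<Sum>i\<in>Basis. (h \<bullet> i) *\<^sub>R pderiv_at f i z) \<le> M * norm h" by (simp add: mult.commute)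
      qed
    qed auto
    also have "\<dots> \<le> L * norm (a - b)" by (intro mult_right_mono) (auto simp: L_def)
    finally show ?thesis .
  next
    case False
    have "norm (f a - f b) \<le> norm (f a) + norm (f b)" by (rule norm_triangle_ineq4)
    also have "\<dots> \<le> 2 * M0" using M0(2)[OF ab(1)] M0(2)[OF ab(2)] by linarith
    also have "\<dots> = (2 * M0 / r) * r" using r by simp
    also have "\<dots> \<le> (2 * M0 / r) * norm (a - b)" using False M0 r by (intro mult_left_mono) auto
    also have "\<dots> \<le> L * norm (a - b)" by (intro mult_right_mono) (auto simp: L_def)
    finally show ?thesis .
  qed
  then show ?thesis using that L by blast
qed

lemma mcshane:
  fixes f :: "'a::metric_space \<Rightarrow> real"
  assumes "K \<noteq> {}" "L \<ge> 0" "\<And>a b. a \<in> K \<Longrightarrow> b \<in> K \<Longrightarrow> \<bar>f a - f b\<bar> \<le> L * dist a b"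
    "\<And>a. a \<in> K \<Longrightarrow> \<bar>f a\<bar> \<le> B"
  obtains g where "\<And>a. a \<in> K \<Longrightarrow> g a = f a" "\<And>x y. \<bar>g x - g y\<bar> \<le> L * dist x y" "\<And>x. \<bar>g x\<bar> \<le> B"
proof -
  define h where "h x = Inf ((\<lambda>y. f y + L * dist x y) ` K)" for x
  have bdd: "bdd_below ((\<lambda>y. f y + L * dist x y) ` K)" for x
  proof (rule bdd_belowI2)
    fix y assume "y \<in> K"
    then show "- B \<le> f y + L * dist x y" using assms(4)[of y] assms(2) zero_le_dist[of x y]
      by (smt (verit) mult_nonneg_nonneg)
  qed
  have low: "h x \<le> f y + L * dist x y" if "y \<in> K" for x y
    unfolding h_def using that bdd by (intro cInf_lower) auto
  have lip: "h x \<le> h x' + L * dist x x'" for x x'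
  proof -
    have "h x - L * dist x x' \<le> h x'"
      unfolding h_def[of x']
    proof (rule cInf_greatest)
      show "(\<lambda>y. f y + L * dist x' y) ` K \<noteq> {}" using assms(1) by auto
      fix z assume "z \<in> (\<lambda>y. f y + L * dist x' y) ` K"
      then obtain y where y: "y \<in> K" "z = f y + L * dist x' y" by auto
      have "h x \<le> f y + L * dist x y" using low[OF y(1)] .
      also have "\<dots> \<le> f y + L * (dist x x' + dist x' y)"
        using dist_triangle[of x y x'] assms(2) by (intro add_left_mono mult_left_mono) auto
      finally show "h x - L * dist x x' \<le> z" using y(2) by (simp add: algebra_simps)
    qed
    then show ?thesis by simp
  qed
  have onK: "h a = f a" if "a \<in> K" for a
  proof (rule antisym)
    show "h a \<le> f a" using low[OF that, of a] by simp
    show "f a \<le> h a" unfolding h_def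
    proof (rule cInf_greatest)
      show "(\<lambda>y. f y + L * dist a y) ` K \<noteq> {}" using assms(1) by auto
      fix z assume "z \<in> (\<lambda>y. f y + L * dist a y) ` K"
      then obtain y where y: "y \<in> K" "z = f y + L * dist a y" by auto
      show "f a \<le> z" using assms(3)[OF that y(1)] y(2) by (simp add: abs_le_iff)
    qed
  qed
  define g where "g x = max (- B) (min B (h x))" for x
  have "g a = f a" if "a \<in> K" for a using onK[OF that] assms(4)[OF that] by (simp add: g_def abs_le_iff)
  moreover have "\<bar>g x - g y\<bar> \<le> L * dist x y" for x y
  proof -
    have "\<bar>h x - h y\<bar> \<le> L * dist x y" using lip[of x y] lip[of y x] by (simp add: dist_commute abs_le_iff)
    then show ?thesis unfolding g_def by (simp add: max_def min_def abs_le_iff)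
  qed
  moreover have "\<bar>g x\<bar> \<le> B" for x
    using assms(4) assms(1) unfolding g_def by (smt (verit) all_not_in_conv)
  ultimately show ?thesis using that by blast
qed

lemma lip_ext:
  fixes F :: "'a::euclidean_space \<Rightarrow> 'b::euclidean_space" and L B :: real
  assumes "K \<noteq> {}" "L \<ge> 0" "\<And>a b. a \<in> K \<Longrightarrow> b \<in> K \<Longrightarrow> norm (F a - F b) \<le> L * norm (a - b)"
    "\<And>a. a \<in> K \<Longrightarrow> norm (F a) \<le> B"
  obtains G where "\<And>a. a \<in> K \<Longrightarrow> G a = F a"
    "\<And>x y. norm (G x - G y) \<le> (real DIM('b) * L) * norm (x - y)" "\<And>x. norm (G x) \<le> real DIM('b) * B"
proof -
  have "\<forall>i\<in>Basis. \<exists>g. (\<forall>a\<in>K. g a = F a \<bullet> i) \<and> (\<forall>x y. \<bar>g x - g y\<bar> \<le> L * dist x y) \<and> (\<forall>x. \<bar>g x\<bar> \<le> B)"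
  proof
    fix i :: 'b assume i: "i \<in> Basis"
    have "\<bar>F a \<bullet> i - F b \<bullet> i\<bar> \<le> L * dist a b" if "a \<in> K" "b \<in> K" for a b
      using Basis_le_norm[OF i, of "F a - F b"] assms(3)[OF that] by (simp add: inner_diff_left dist_norm)
    moreover have "\<bar>F a \<bullet> i\<bar> \<le> B" if "a \<in> K" for a
      using Basis_le_norm[OF i, of "F a"] assms(4)[OF that] by simp
    ultimately obtain g where "\<And>a. a \<in> K \<Longrightarrow> g a = F a \<bullet> i" "\<And>x y. \<bar>g x - g y\<bar> \<le> L * dist x y" "\<And>x. \<bar>g x\<bar> \<le> B"
      using mcshane[OF assms(1,2), of "\<lambda>a. F a \<bullet> i" B] by blast
    then show "\<exists>g. (\<forall>a\<in>K. g a = F a \<bullet> i) \<and> (\<forall>x y. \<bar>g x - g y\<bar> \<le> L * dist x y) \<and> (\<forall>x. \<bar>g x\<bar> \<le> B)"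
      by blast
  qed
  then obtain gg where gg: "\<And>i. i \<in> Basis \<Longrightarrow> (\<forall>a\<in>K. gg i a = F a \<bullet> i) \<and> (\<forall>x y. \<bar>gg i x - gg i y\<bar> \<le> L * dist x y) \<and> (\<forall>x. \<bar>gg i x\<bar> \<le> B)"
    by metis
  define G where "G x = (\<Sum>i\<in>Basis. gg i x *\<^sub>R i)" for x
  have "G a = F a" if "a \<in> K" for a
    using gg that by (simp add: G_def euclidean_representation)
  moreover have "norm (G x - G y) \<le> (real DIM('b) * L) * norm (x - y)" for x y
  proof -
    have "norm (G x - G y) = norm (\<Sum>i\<in>Basis. (gg i x - gg i y) *\<^sub>R i)"
      by (simp add: G_def sum_subtractf scaleR_diff_left)
    also have "\<dots> \<le> (\<Sum>i\<in>(Basis::'b set). norm ((gg i x - gg i y) *\<^sub>R i))" by (rule norm_sum)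
    also have "\<dots> \<le> (\<Sum>i\<in>(Basis::'b set). L * norm (x - y))"
      using gg by (intro sum_mono) (simp add: dist_norm)
    finally show ?thesis by simp
  qed
  moreover have "norm (G x) \<le> real DIM('b) * B" for x
  proof -
    have "norm (G x) \<le> (\<Sum>i\<in>(Basis::'b set). norm (gg i x *\<^sub>R i))" unfolding G_def by (rule norm_sum)
    also have "\<dots> \<le> (\<Sum>i\<in>(Basis::'b set). B)" using gg by (intro sum_mono) simp
    finally show ?thesis by simp
  qed
  ultimately show ?thesis using that by blast
qed

lemma at_within_Ici_local:
  fixes t T :: real
  assumes "0 \<le> t" "t < T"
  shows "at t within {0..T} = at t within {0..}"
  by (rule at_within_nhd[of _ "{..<T}"]) (use assms in auto)

lemma cont_indef:
  fixes g :: "real \<Rightarrow> 'a::banach"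
  assumes "continuous_on UNIV g"
  shows "continuous_on {0..} (\<lambda>u. integral {0..u} g)"
proof -
  have "continuous (at u within {0..}) (\<lambda>u. integral {0..u} g)" if "u \<ge> 0" for u
  proof -
    have "continuous_on {0..u+1} (\<lambda>u. integral {0..u} g)"
      by (rule indefinite_integral_continuous_1, rule integrable_continuous_real,
          rule continuous_on_subset[OF assms]) simp
    then have "continuous (at u within {0..u+1}) (\<lambda>u. integral {0..u} g)"
      using that by (simp add: continuous_on_eq_continuous_within)
    then show ?thesis using at_within_Ici_local[of u "u+1"] that by simp
  qed
  then show ?thesis by (simp add: continuous_on_eq_continuous_within)
qed

lemma exp_integral:
  fixes k u :: real assumes "k > 0" "u \<ge> 0"
  shows "((\<lambda>s. exp (k * s)) has_integral ((exp (k*u) - 1) / k)) {0..u}"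
proof -
  have "((\<lambda>s. exp (k * s) / k) has_vector_derivative exp (k * x)) (at x within {0..u})" for x
    unfolding has_real_derivative_iff_has_vector_derivative[symmetric]
    using assms by (auto intro!: derivative_eq_intros)
  from fundamental_theorem_of_calculus[OF assms(2) this] show ?thesis by (simp add: diff_divide_distrib)
qed

lemma global_exist:
  fixes G :: "'a::euclidean_space \<Rightarrow> 'a" and x0 :: 'a
  assumes L: "L > 0" "\<And>x y. norm (G x - G y) \<le> L * norm (x - y)" and B: "\<And>x. norm (G x) \<le> B"
  obtains \<phi> where "\<phi> 0 = x0" "\<And>t. t \<ge> 0 \<Longrightarrow> (\<phi> has_vector_derivative G (\<phi> t)) (at t within {0..})"
proof -
  define k where "k = 2 * L"
  have k: "k > 0" using L by (simp add: k_def)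
  have B0: "B \<ge> 0" using B[of x0] norm_ge_zero order_trans by blast
  have Gc: "continuous_on UNIV G"
    by (rule lipschitz_on_continuous_on[of L], rule lipschitz_onI) (use L in \<open>auto simp: dist_norm\<close>)
  define ph where "ph \<psi> s = x0 + exp (k * s) *\<^sub>R apply_bcontfun \<psi> s" for \<psi> :: "real \<Rightarrow>\<^sub>C 'a" and s
  define gi where "gi \<psi> s = G (ph \<psi> s)" for \<psi> s
  have gic: "continuous_on UNIV (gi \<psi>)" for \<psi>
    unfolding gi_def ph_def by (intro continuous_on_compose2[OF Gc] continuous_intros) auto
  have gii: "gi \<psi> integrable_on {0..u}" for \<psi> u
    by (rule integrable_continuous_real, rule continuous_on_subset[OF gic]) simp
  define Tf where "Tf \<psi> t = exp (- k * max 0 t) *\<^sub>R integral {0..max 0 t} (gi \<psi>)" for \<psi> t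
  have intbound: "norm (integral {0..u} (gi \<psi>)) \<le> B * u" if "u \<ge> 0" for \<psi> u
  proof -
    have "(gi \<psi> has_integral integral {0..u} (gi \<psi>)) (cbox 0 u)"
      using gii by (simp add: has_integral_integral)
    from has_integral_bound[OF B0 this] show ?thesis using that by (simp add: gi_def B)
  qed
  have Tfb: "Tf \<psi> \<in> bcontfun" for \<psi>
  proof -
    have "continuous_on UNIV (Tf \<psi>)"
      unfolding Tf_def
      by (intro continuous_intros continuous_on_compose2[OF cont_indef[OF gic]]) auto
    moreover have "norm (Tf \<psi> t) \<le> B / k" for t
    proof -
      define u where "u = max 0 t"
      have u: "u \<ge> 0" by (simp add: u_def)
      have e: "k * u \<le> exp (k * u)" using exp_ge_add_one_self[of "k*u"] by linarith
      have "norm (Tf \<psi> t) = exp (- k * u) * norm (integral {0..u} (gi \<psi>))"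
        by (simp add: Tf_def u_def)
      also have "\<dots> \<le> exp (- k * u) * (B * u)" using intbound[OF u] by (intro mult_left_mono) auto
      also have "\<dots> = (B / k) * ((k * u) / exp (k * u))" using k by (simp add: exp_minus field_simps)
      also have "\<dots> \<le> (B / k) * 1" using e k B0 by (intro mult_left_mono) (auto simp: divide_le_eq)
      finally show ?thesis by simp
    qed
    then have "bounded (range (Tf \<psi>))" by (auto simp: bounded_iff)
    ultimately show ?thesis by (simp add: bcontfun_def)
  qed
  define T where "T \<psi> = Bcontfun (Tf \<psi>)" for \<psi>
  have Tapp: "apply_bcontfun (T \<psi>) = Tf \<psi>" for \<psi>
    unfolding T_def using Tfb by (simp add: Bcontfun_inverse)
  have contr: "dist (T \<psi>1) (T \<psi>2) \<le> (1/2) * dist \<psi>1 \<psi>2" for \<psi>1 \<psi>2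
  proof (rule dist_bound)
    fix t :: real
    define D where "D = dist \<psi>1 \<psi>2"
    have D0: "D \<ge> 0" by (simp add: D_def)
    define u where "u = max 0 t"
    have u: "u \<ge> 0" by (simp add: u_def)
    have pt: "norm (gi \<psi>1 s - gi \<psi>2 s) \<le> L * D * exp (k * s)" for s
    proof -
      have "norm (gi \<psi>1 s - gi \<psi>2 s) \<le> L * norm (ph \<psi>1 s - ph \<psi>2 s)" unfolding gi_def by (rule L(2))
      also have "ph \<psi>1 s - ph \<psi>2 s = exp (k * s) *\<^sub>R (apply_bcontfun \<psi>1 s - apply_bcontfun \<psi>2 s)"
        by (simp add: ph_def scaleR_diff_right)
      also have "norm \<dots> = exp (k * s) * dist (apply_bcontfun \<psi>1 s) (apply_bcontfun \<psi>2 s)"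
        by (simp add: dist_norm)
      also have "L * \<dots> \<le> L * (exp (k * s) * D)"
        unfolding D_def using L(1) by (intro mult_left_mono dist_bounded) auto
      finally show ?thesis by (simp add: mult_ac)
    qed
    have ei: "((\<lambda>s. L * D * exp (k * s)) has_integral (L * D * ((exp (k*u) - 1) / k))) {0..u}"
      using has_integral_mult_right[OF exp_integral[OF k u]] by simp
    have "norm (integral {0..u} (\<lambda>s. gi \<psi>1 s - gi \<psi>2 s)) \<le> integral {0..u} (\<lambda>s. L * D * exp (k * s))"
      by (rule integral_norm_bound_integral) (use gii ei pt in \<open>auto intro: integrable_diff has_integral_integrable\<close>)
    also have "\<dots> = L * D * ((exp (k*u) - 1) / k)" using ei by (rule integral_unique)
    finally have ib: "norm (integral {0..u} (gi \<psi>1) - integral {0..u} (gi \<psi>2)) \<le> L * D * ((exp (k*u) - 1) / k)"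
      using integral_diff[OF gii gii] by metis
    have "dist (apply_bcontfun (T \<psi>1) t) (apply_bcontfun (T \<psi>2) t)
        = exp (- k * u) * norm (integral {0..u} (gi \<psi>1) - integral {0..u} (gi \<psi>2))"
      by (simp add: Tapp Tf_def u_def dist_norm flip: scaleR_diff_right)
    also have "\<dots> \<le> exp (- k * u) * (L * D * ((exp (k*u) - 1) / k))"
      using ib by (intro mult_left_mono) auto
    also have "\<dots> = D / 2 * (1 - exp (- k * u))"
      using k L(1) by (simp add: k_def exp_minus field_simps)
    also have "\<dots> \<le> D / 2" using D0 by (simp add: mult_left_le)
    finally show "dist (apply_bcontfun (T \<psi>1) t) (apply_bcontfun (T \<psi>2) t) \<le> 1 / 2 * dist \<psi>1 \<psi>2"
      by (simp add: D_def)
  qed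
  obtain \<psi> where fixp: "T \<psi> = \<psi>" using banach_fix_type[of "1/2" T] contr by auto
  define \<phi> where "\<phi> = ph \<psi>"
  have phi_eq: "\<phi> t = x0 + integral {0..t} (\<lambda>s. G (\<phi> s))" if "t \<ge> 0" for t
  proof -
    have "apply_bcontfun \<psi> t = Tf \<psi> t" using fixp Tapp by metis
    then have "apply_bcontfun \<psi> t = exp (- k * t) *\<^sub>R integral {0..t} (gi \<psi>)"
      using that by (simp add: Tf_def)
    then have "\<phi> t = x0 + (exp (k * t) * exp (- k * t)) *\<^sub>R integral {0..t} (gi \<psi>)"
      by (simp add: \<phi>_def ph_def)
    also have "exp (k * t) * exp (- k * t) = 1" by (simp add: exp_minus field_simps)
    finally show ?thesis by (simp add: gi_def \<phi>_def)
  qed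
  have "\<phi> 0 = x0" using phi_eq[of 0] by simp
  moreover have "(\<phi> has_vector_derivative G (\<phi> t)) (at t within {0..})" if t: "t \<ge> 0" for t
  proof -
    have gc: "continuous_on {0..t+1} (\<lambda>s. G (\<phi> s))"
      using continuous_on_subset[OF gic] by (simp add: gi_def \<phi>_def)
    have "((\<lambda>u. x0 + integral {0..u} (\<lambda>s. G (\<phi> s))) has_vector_derivative G (\<phi> t)) (at t within {0..t+1})"
      using integral_has_vector_derivative[OF gc, of t] t
      by (auto intro!: derivative_eq_intros)
    then have "(\<phi> has_vector_derivative G (\<phi> t)) (at t within {0..t+1})"
      by (rule has_vector_derivative_transform[rotated 2]) (use t phi_eq in auto)
    then show ?thesis using at_within_Ici_local[of t "t+1"] t by simp
  qed
  ultimately show ?thesis using that by blast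
qed

lemma chain_grad:
  fixes h :: "'a::euclidean_space \<Rightarrow> real"
  assumes "(y has_vector_derivative v) (at t within S)" "h differentiable (at (y t))"
  shows "((\<lambda>s. h (y s)) has_vector_derivative (v \<bullet> grad h (y t))) (at t within S)"
proof -
  have d1: "(y has_derivative (\<lambda>r. r *\<^sub>R v)) (at t within S)"
    using assms(1) by (simp add: has_vector_derivative_def)
  have d2: "(h has_derivative (\<lambda>w. w \<bullet> grad h (y t))) (at (y t) within y ` S)"
    using grad_deriv[OF assms(2)] has_derivative_at_withinI by blast
  have "((\<lambda>s. h (y s)) has_derivative (\<lambda>r. (r *\<^sub>R v) \<bullet> grad h (y t))) (at t within S)"
    using diff_chain_within[OF d1 d2] by (simp add: o_def)
  then show ?thesis by (simp add: has_vector_derivative_def)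
qed

lemma within_Ici_at:
  fixes t :: real assumes "t > 0"
  shows "at t within {0..} = at t"
  by (rule at_within_nhd[of _ "{0<..}"]) (use assms in auto)

lemma is_solution_shift:
  assumes "is_solution U F x0 x" "a \<ge> 0"
  shows "is_solution U F (x a) (\<lambda>s. x (a + s))"
  unfolding is_solution_def
proof (intro conjI allI impI)
  show "x (a + 0) = x a" by simp
  fix t :: real assume t: "t \<ge> 0"
  then show "x (a + t) \<in> U" using assms by (simp add: is_solution_def)
  have d: "(x has_vector_derivative F (x (a + t))) (at (a + t) within {0..})"
    using assms t by (simp add: is_solution_def)
  have d2: "(x has_vector_derivative F (x (a + t))) (at ((\<lambda>s. a + s) t) within (\<lambda>s. a + s) ` {0..})"
    by (rule has_vector_derivative_within_subset[OF d]) (use assms(2) in auto)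
  have d1: "((\<lambda>s. a + s) has_vector_derivative 1) (at t within {0..})"
    by (auto intro!: derivative_eq_intros)
  show "((\<lambda>s. x (a + s)) has_vector_derivative F (x (a + t))) (at t within {0..})"
    using vector_diff_chain_within[OF d1 d2] by (simp add: o_def)
qed

lemma pigeon:
  fixes f :: "nat \<Rightarrow> real"
  assumes "N > 0"
  shows "\<exists>j<N. f j - f (Suc j) \<le> (f 0 - f N) / N"
proof (rule ccontr)
  assume "\<not> ?thesis"
  then have "\<forall>j\<in>{..<N}. (f 0 - f N) / N < f j - f (Suc j)" by auto
  then have "(\<Sum>j<N. (f 0 - f N) / N) < (\<Sum>j<N. f j - f (Suc j))"
    using assms by (intro sum_strict_mono) auto
  also have "\<dots> = f 0 - f N" by (rule sum_lessThan_telescope')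
  finally show False using assms by simp
qed

lemma compact_sub:
  fixes K :: "'a::metric_space set"
  assumes "compact K" "continuous_on K f" "closed C"
  shows "compact {x\<in>K. f x \<in> C}"
proof -
  have "closed (K \<inter> f -` C)"
    using continuous_closed_preimage[OF assms(2) compact_imp_closed[OF assms(1)] assms(3)] .
  moreover have "{x\<in>K. f x \<in> C} = K \<inter> (K \<inter> f -` C)" by auto
  ultimately show ?thesis using compact_Int_closed[OF assms(1)] by metis
qed

locale lsys =
  fixes U :: "'a::euclidean_space set" and X :: "'a \<Rightarrow> 'a" and V :: "'a \<Rightarrow> real" and c :: real
  assumes opn: "open U" and XC1: "Ck_on 1 U X" and VC2: "Ck_on 2 U V"
    and Vnn: "\<forall>x\<in>U. V x \<ge> 0" and Lne: "{x\<in>U. V x = 0} \<noteq> {}" and orth: "\<forall>x\<in>U. grad V x \<bullet> X x = 0"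
    and cpos: "c > 0" and Kc: "compact {x\<in>U. V x \<in> {0..c}}"
begin

definition "F x = X x - grad V x"
definition "K = {x\<in>U. V x \<in> {0..c}}"
definition "L = {x\<in>U. V x = 0}"

lemma KU: "K \<subseteq> U" by (auto simp: K_def)
lemma cK: "compact K" using Kc by (simp add: K_def)
lemma LK: "L \<subseteq> K" using cpos by (auto simp: K_def L_def)

lemma Vdiff: "x \<in> U \<Longrightarrow> V differentiable (at x)"
  using VC2 by (simp add: numeral_2_eq_2)

lemma Vcont: "continuous_on U V"
  using Ck_on_mono[OF opn Ck_on_mono[OF opn VC2[unfolded numeral_2_eq_2]]] by simp

lemma gradC1: "Ck_on 1 U (grad V)"
proof -
  have "Ck_on 1 U (\<lambda>x. pderiv_at V i x)" if "i \<in> Basis" for i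
    using VC2 that by (simp add: numeral_2_eq_2)
  then have "Ck_on 1 U (\<lambda>x. \<Sum>i\<in>Basis. pderiv_at V i x *\<^sub>R i)"
    by (intro Ck_on_sum[OF opn] Ck_on_bilinear[OF opn bounded_bilinear_scaleR] Ck_on_const) auto
  then show ?thesis by (simp add: grad_def[abs_def])
qed

lemma FC1: "Ck_on 1 U F"
proof -
  have "Ck_on 1 U (\<lambda>x. X x + (-1::real) *\<^sub>R grad V x)"
    by (intro Ck_on_add[OF opn] XC1 Ck_on_bilinear[OF opn bounded_bilinear_scaleR] Ck_on_const gradC1)
  then show ?thesis by (simp add: F_def[abs_def])
qed

lemma gradcont: "continuous_on U (grad V)"
  using Ck_on_mono[OF opn gradC1[unfolded One_nat_def]] by simp

lemma Fcont: "continuous_on U F"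
  using Ck_on_mono[OF opn FC1[unfolded One_nat_def]] by simp

lemma cL: "compact L"
proof -
  have "L = {x\<in>K. V x \<in> {0}}" using cpos by (auto simp: K_def L_def)
  then show ?thesis using compact_sub[OF cK continuous_on_subset[OF Vcont KU], of "{0}"] by simp
qed

lemma Lne': "L \<noteq> {}" using Lne by (simp add: L_def)

lemma Flip: obtains LF where "LF > 0" "\<And>a b. a \<in> K \<Longrightarrow> b \<in> K \<Longrightarrow> norm (F a - F b) \<le> LF * norm (a - b)"
  using C1_lipschitz[OF opn FC1 cK KU] by blast

lemma V_deriv:
  assumes "x t \<in> U" "(x has_vector_derivative F (x t)) (at t within S)"
  shows "((\<lambda>s. V (x s)) has_vector_derivative (- (norm (grad V (x t)))\<^sup>2)) (at t within S)"
proof -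
  have "F (x t) \<bullet> grad V (x t) = - (norm (grad V (x t)))\<^sup>2"
  proof -
    have "X (x t) \<bullet> grad V (x t) = 0" using orth assms(1) inner_commute by metis
    then show ?thesis by (simp add: F_def inner_diff_left power2_norm_eq_inner)
  qed
  then show ?thesis using chain_grad[OF assms(2) Vdiff[OF assms(1)]] by simp
qed

lemma V_mono:
  assumes "is_solution U F x0 x" "0 \<le> a" "a \<le> b"
  shows "V (x b) \<le> V (x a)"
proof (cases "a = b")
  case False
  then have ab: "a < b" using assms by simp
  have "((\<lambda>s. V (x s)) has_derivative (\<lambda>h. h *\<^sub>R (- (norm (grad V (x s)))\<^sup>2))) (at s within {a..b})"
    if "a \<le> s" "s \<le> b" for s
  proof -
    have "x s \<in> U" "(x has_vector_derivative F (x s)) (at s within {0..})"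
      using assms that by (auto simp: is_solution_def)
    from V_deriv[OF this] show ?thesis
      unfolding has_vector_derivative_def using assms(2) by (auto intro: has_derivative_subset)
  qed
  from mvt_simple[OF ab this] obtain s where
    "V (x b) - V (x a) = (b - a) *\<^sub>R (- (norm (grad V (x s)))\<^sup>2)" by blast
  moreover have "(b - a) * (norm (grad V (x s)))\<^sup>2 \<ge> 0" using ab by simp
  ultimately show ?thesis by simp
qed simp

lemma sol_in_K:
  assumes "is_solution U F x0 x" "t \<ge> 0" "V x0 \<le> c"
  shows "x t \<in> K" "V (x t) \<le> V x0"
proof -
  have "x 0 = x0" "x t \<in> U" using assms by (auto simp: is_solution_def)
  moreover have "V (x t) \<le> V (x 0)" using V_mono[OF assms(1) _ assms(2)] by simp
  ultimately show "V (x t) \<le> V x0" "x t \<in> K" using assms Vnn by (auto simp: K_def)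
qed

end

context lsys begin

lemma existence:
  assumes x0: "x0 \<in> U" "V x0 < c"
  shows "\<exists>x. is_solution U F x0 x"
proof -
  obtain LF where LF: "LF > 0" "\<And>a b. a \<in> K \<Longrightarrow> b \<in> K \<Longrightarrow> norm (F a - F b) \<le> LF * norm (a - b)"
    using Flip by blast
  obtain M0 where M0: "M0 \<ge> 0" "\<And>a. a \<in> K \<Longrightarrow> norm (F a) \<le> M0"
    using cont_bound[OF cK continuous_on_subset[OF Fcont KU]] by blast
  have Kne: "K \<noteq> {}" using x0 Vnn by (auto simp: K_def)
  obtain G where G: "\<And>a. a \<in> K \<Longrightarrow> G a = F a"
    "\<And>x y. norm (G x - G y) \<le> (real DIM('a) * LF) * norm (x - y)" "\<And>x. norm (G x) \<le> real DIM('a) * M0"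
    using lip_ext[OF Kne less_imp_le[OF LF(1)] LF(2) M0(2)] by blast
  have DL: "real DIM('a) * LF > 0" using LF by simp
  obtain \<phi> where phi: "\<phi> 0 = x0" "\<And>t. t \<ge> 0 \<Longrightarrow> (\<phi> has_vector_derivative G (\<phi> t)) (at t within {0..})"
    using global_exist[OF DL G(2) G(3)] by blast
  define W where "W = {x\<in>U. V x < c}"
  have WK: "W \<subseteq> K"
  proof
    fix x assume "x \<in> W" then show "x \<in> K" using Vnn unfolding W_def K_def by force
  qed
  have oW: "open W"
  proof -
    have "\<forall>B. open B \<longrightarrow> open (V -` B \<inter> U)" using continuous_on_open_vimage[OF opn, of V] Vcont by blast
    then have "open (V -` {..<c} \<inter> U)" by simp
    moreover have "W = V -` {..<c} \<inter> U" by (auto simp: W_def)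
    ultimately show ?thesis by simp
  qed
  have phic: "continuous_on {0..} \<phi>"
    unfolding continuous_on_eq_continuous_within
  proof
    fix t :: real assume "t \<in> {0..}"
    then show "continuous (at t within {0..}) \<phi>" using has_vector_derivative_continuous[OF phi(2)] by simp
  qed
  have inW: "\<phi> t \<in> W" if "t \<ge> 0" for t
  proof (rule ccontr)
    assume nt: "\<phi> t \<notin> W"
    define S where "S = {0..} \<inter> \<phi> -` (- W)"
    have clS: "closed S" unfolding S_def
      using continuous_closed_preimage[OF phic closed_atLeast] oW by (simp add: closed_Compl)
    have Sne: "S \<noteq> {}" using nt that by (auto simp: S_def)
    have bS: "bdd_below S" by (auto simp: S_def bdd_below_def)
    define s0 where "s0 = Inf S"
    have s0S: "s0 \<in> S" using closed_contains_Inf[OF Sne bS clS] by (simp add: s0_def)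
    have s0ge: "s0 \<ge> 0" and nW: "\<phi> s0 \<notin> W" using s0S by (auto simp: S_def)
    have "s0 \<noteq> 0" using nW phi(1) x0 by (auto simp: W_def)
    then have s0pos: "s0 > 0" using s0ge by simp
    have befW: "\<phi> s \<in> W" if "0 \<le> s" "s < s0" for s
    proof (rule ccontr)
      assume "\<phi> s \<notin> W"
      then have "s \<in> S" using that by (auto simp: S_def)
      then have "s0 \<le> s" unfolding s0_def using bS by (rule cInf_lower)
      then show False using that by simp
    qed
    have "\<phi> ` closure {0..<s0} \<subseteq> K"
    proof (rule image_closure_subset)
      show "continuous_on (closure {0..<s0}) \<phi>"
        using continuous_on_subset[OF phic] s0pos by auto
      show "closed K" using cK compact_imp_closed by blast
      show "\<phi> ` {0..<s0} \<subseteq> K" using befW WK by auto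
    qed
    then have phK: "\<phi> ` {0..s0} \<subseteq> K" using s0pos by simp
    have Vc: "continuous_on {0..s0} (\<lambda>s. V (\<phi> s))"
      by (rule continuous_on_compose2[OF Vcont continuous_on_subset[OF phic]]) (use phK KU in auto)
    have der: "((\<lambda>s. V (\<phi> s)) has_derivative (\<lambda>h. h *\<^sub>R (- (norm (grad V (\<phi> s)))\<^sup>2))) (at s)"
      if "0 < s" "s < s0" for s
    proof -
      have pU: "\<phi> s \<in> U" using befW[of s] that WK KU by auto
      have "(\<phi> has_vector_derivative G (\<phi> s)) (at s)" using phi(2)[of s] that within_Ici_at[of s] by simp
      moreover have "G (\<phi> s) = F (\<phi> s)" using G(1) befW[of s] that WK by auto
      ultimately have "(\<phi> has_vector_derivative F (\<phi> s)) (at s)" by simp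
      from V_deriv[OF pU this] show ?thesis by (simp add: has_vector_derivative_def)
    qed
    obtain \<xi> where "V (\<phi> s0) - V (\<phi> 0) = (s0 - 0) *\<^sub>R (- (norm (grad V (\<phi> \<xi>)))\<^sup>2)"
      using mvt[OF s0pos Vc der] by blast
    moreover have "s0 * (norm (grad V (\<phi> \<xi>)))\<^sup>2 \<ge> 0" using s0pos by simp
    ultimately have "V (\<phi> s0) \<le> V (\<phi> 0)" by simp
    then have "V (\<phi> s0) < c" using x0 phi(1) by simp
    moreover have "\<phi> s0 \<in> U"
    proof -
      have "s0 \<in> {0..s0}" using s0pos by simp
      then show ?thesis using phK KU by blast
    qed
    ultimately show False using nW by (simp add: W_def)
  qed
  have "is_solution U F x0 \<phi>"
    unfolding is_solution_def
  proof (intro conjI allI impI)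
    show "\<phi> 0 = x0" by (rule phi(1))
    fix t :: real assume t: "t \<ge> 0"
    show "\<phi> t \<in> U" using inW[OF t] by (simp add: W_def)
    show "(\<phi> has_vector_derivative F (\<phi> t)) (at t within {0..})"
      using phi(2)[OF t] G(1)[of "\<phi> t"] inW[OF t] WK by auto
  qed
  then show ?thesis by blast
qed

end

context lsys begin

lemma sol_cont:
  assumes "is_solution U F p x"
  shows "continuous_on {0..} x"
  unfolding continuous_on_eq_continuous_within
proof
  fix t :: real assume "t \<in> {0..}"
  then have "(x has_vector_derivative F (x t)) (at t within {0..})" using assms by (simp add: is_solution_def)
  then show "continuous (at t within {0..}) x" by (rule has_vector_derivative_continuous)
qed

lemma sol_integral:
  assumes "is_solution U F p x" "t \<ge> 0"
  shows "((\<lambda>s. F (x s)) has_integral (x t - p)) {0..t}"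
proof -
  have "((\<lambda>s. F (x s)) has_integral (x t - x 0)) {0..t}"
  proof (rule fundamental_theorem_of_calculus[OF assms(2)])
    fix s assume "s \<in> {0..t}"
    then show "(x has_vector_derivative F (x s)) (at s within {0..t})"
      using assms(1) by (auto simp: is_solution_def intro: has_vector_derivative_within_subset)
  qed
  then show ?thesis using assms by (simp add: is_solution_def)
qed

lemma window:
  assumes LF: "\<And>a b. a \<in> K \<Longrightarrow> b \<in> K \<Longrightarrow> norm (F a - F b) \<le> LF * norm (a - b)" "LF > 0"
    and tau: "\<tau> > 0" "LF * \<tau> \<le> 1/2"
    and s1: "is_solution U F p1 x1" "V p1 \<le> c" and s2: "is_solution U F p2 x2" "V p2 \<le> c"
  shows "norm (x1 \<tau> - x2 \<tau>) \<le> 2 * norm (p1 - p2)"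
proof -
  have cont: "continuous_on {0..\<tau>} (\<lambda>s. norm (x1 s - x2 s))"
    by (intro continuous_intros continuous_on_subset[OF sol_cont[OF s1(1)]]
        continuous_on_subset[OF sol_cont[OF s2(1)]]) auto
  obtain sm where sm: "sm \<in> {0..\<tau>}" "\<And>s. s \<in> {0..\<tau>} \<Longrightarrow> norm (x1 s - x2 s) \<le> norm (x1 sm - x2 sm)"
  proof -
    have "{0..\<tau>} \<noteq> {}" using tau by simp
    from continuous_attains_sup[OF compact_Icc this cont] show ?thesis using that by blast
  qed
  define M where "M = norm (x1 sm - x2 sm)"
  have M0: "M \<ge> 0" by (simp add: M_def)
  have bnd: "norm (x1 t - x2 t) \<le> norm (p1 - p2) + M / 2" if t: "t \<in> {0..\<tau>}" for t
  proof -
    have t0: "t \<ge> 0" using t by simp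
    have I: "((\<lambda>s. F (x1 s) - F (x2 s)) has_integral ((x1 t - p1) - (x2 t - p2))) {0..t}"
      by (rule has_integral_diff[OF sol_integral[OF s1(1) t0] sol_integral[OF s2(1) t0]])
    have pt: "norm (F (x1 s) - F (x2 s)) \<le> LF * M" if s: "s \<in> cbox 0 t" for s
    proof -
      have s0: "s \<ge> 0" and sT: "s \<in> {0..\<tau>}" using t s by auto
      have "norm (F (x1 s) - F (x2 s)) \<le> LF * norm (x1 s - x2 s)"
        using LF(1) sol_in_K(1)[OF s1(1) s0 s1(2)] sol_in_K(1)[OF s2(1) s0 s2(2)] by blast
      also have "\<dots> \<le> LF * M" using sm(2)[OF sT] LF(2) by (simp add: M_def)
      finally show ?thesis .
    qed
    have I': "((\<lambda>s. F (x1 s) - F (x2 s)) has_integral ((x1 t - p1) - (x2 t - p2))) (cbox 0 t)"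
      using I by simp
    have LM: "0 \<le> LF * M" using LF(2) M0 by simp
    have "norm ((x1 t - p1) - (x2 t - p2)) \<le> LF * M * t"
      using has_integral_bound[OF LM I' pt] t0 by simp
    also have "\<dots> \<le> LF * M * \<tau>" using t LF(2) M0 by (intro mult_left_mono) auto
    also have "\<dots> = M * (LF * \<tau>)" by (simp add: mult_ac)
    also have "\<dots> \<le> M * (1/2)" using tau(2) M0 by (rule mult_left_mono)
    finally have "norm ((x1 t - x2 t) - (p1 - p2)) \<le> M / 2" by (simp add: algebra_simps)
    moreover have "norm (x1 t - x2 t) \<le> norm (p1 - p2) + norm ((x1 t - x2 t) - (p1 - p2))"
      by (rule norm_triangle_sub)
    ultimately show ?thesis by linarith
  qed
  have "M \<le> norm (p1 - p2) + M / 2" using bnd[OF sm(1)] by (simp add: M_def)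
  then have "M \<le> 2 * norm (p1 - p2)" by simp
  moreover have "norm (x1 \<tau> - x2 \<tau>) \<le> M" using sm(2)[of \<tau>] tau by (simp add: M_def)
  ultimately show ?thesis by simp
qed

end

context lsys begin

lemma attract:
  assumes crit: "\<And>p y \<tau>. p \<in> U \<Longrightarrow> V p \<le> c \<Longrightarrow> \<tau> > 0 \<Longrightarrow> is_solution U F p y
      \<Longrightarrow> (\<forall>s\<in>{0..\<tau>}. grad V (y s) = 0) \<Longrightarrow> V p = 0"
    and eta: "\<eta> > 0"
  shows "\<exists>T>0. \<forall>x0 x. x0 \<in> U \<longrightarrow> V x0 \<le> c/2 \<longrightarrow> is_solution U F x0 x \<longrightarrow> V (x T) < \<eta>"
proof (rule ccontr)
  assume neg: "\<not> ?thesis"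
  obtain LF where LF: "LF > 0" "\<And>a b. a \<in> K \<Longrightarrow> b \<in> K \<Longrightarrow> norm (F a - F b) \<le> LF * norm (a - b)"
    using Flip by blast
  define \<tau> where "\<tau> = 1 / (2 * LF)"
  have tau: "\<tau> > 0" "LF * \<tau> \<le> 1/2" using LF(1) by (auto simp: \<tau>_def)
  have "\<exists>x0 x. x0 \<in> U \<and> V x0 \<le> c/2 \<and> is_solution U F x0 x \<and> \<eta> \<le> V (x (real (Suc n) * \<tau>))" for n
  proof -
    have "real (Suc n) * \<tau> > 0" using tau by simp
    then show ?thesis using neg by (meson not_less)
  qed
  then obtain x0s xs where H: "\<And>n. x0s n \<in> U \<and> V (x0s n) \<le> c/2 \<and> is_solution U F (x0s n) (xs n)
      \<and> \<eta> \<le> V (xs n (real (Suc n) * \<tau>))" by metis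
  have c2: "c/2 \<le> c" using cpos by simp
  have "\<exists>j<Suc n. V (xs n (real j * \<tau>)) - V (xs n (real (Suc j) * \<tau>)) \<le> (c/2) / real (Suc n)" for n
  proof -
    obtain j where j: "j < Suc n" "V (xs n (real j * \<tau>)) - V (xs n (real (Suc j) * \<tau>))
        \<le> (V (xs n (real 0 * \<tau>)) - V (xs n (real (Suc n) * \<tau>))) / real (Suc n)"
      using pigeon[of "Suc n" "\<lambda>j. V (xs n (real j * \<tau>))"] by auto
    have x0: "xs n 0 = x0s n" using H[of n] by (simp add: is_solution_def)
    have "V (xs n (real (Suc n) * \<tau>)) \<ge> 0" using H[of n] Vnn tau
      by (simp add: is_solution_def)
    then have "V (xs n (real 0 * \<tau>)) - V (xs n (real (Suc n) * \<tau>)) \<le> c/2" using H[of n] x0 by simp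
    then have "(V (xs n (real 0 * \<tau>)) - V (xs n (real (Suc n) * \<tau>))) / real (Suc n) \<le> (c/2) / real (Suc n)"
      by (intro divide_right_mono) auto
    then show ?thesis using j by force
  qed
  then obtain js where js: "\<And>n. js n < Suc n"
    "\<And>n. V (xs n (real (js n) * \<tau>)) - V (xs n (real (Suc (js n)) * \<tau>)) \<le> (c/2) / real (Suc n)"
    by metis
  define pn where "pn n = xs n (real (js n) * \<tau>)" for n
  define zs where "zs n = (\<lambda>s. xs n (real (js n) * \<tau> + s))" for n
  have zsol: "is_solution U F (pn n) (zs n)" for n
    unfolding pn_def zs_def using is_solution_shift[of U F "x0s n" "xs n" "real (js n) * \<tau>"] H[of n] tau by simp
  have pnV: "pn n \<in> U" "V (pn n) \<le> c/2" for n
  proof -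
    have jt: "real (js n) * \<tau> \<ge> 0" using tau by simp
    have sn: "is_solution U F (x0s n) (xs n)" and vn: "V (x0s n) \<le> c" "V (x0s n) \<le> c/2" using H[of n] c2 by auto
    have "pn n \<in> K" "V (pn n) \<le> V (x0s n)" unfolding pn_def using sol_in_K[OF sn jt vn(1)] by auto
    then show "pn n \<in> U" "V (pn n) \<le> c/2" using vn(2) unfolding K_def by auto
  qed
  have ztau: "zs n \<tau> = xs n (real (Suc (js n)) * \<tau>)" for n
    by (simp add: zs_def algebra_simps)
  have drop: "V (pn n) - V (zs n \<tau>) \<le> (c/2) / real (Suc n)" for n
    using js(2)[of n] by (simp add: pn_def ztau)
  have zeta: "\<eta> \<le> V (zs n \<tau>)" for n
  proof -
    have sn: "is_solution U F (x0s n) (xs n)" using H[of n] by blast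
    have "real (Suc (js n)) \<le> real (Suc n)" using js(1)[of n] by simp
    then have le: "real (Suc (js n)) * \<tau> \<le> real (Suc n) * \<tau>" using tau by (simp add: mult_right_mono)
    have "V (xs n (real (Suc n) * \<tau>)) \<le> V (xs n (real (Suc (js n)) * \<tau>))"
      by (rule V_mono[OF sn _ le]) (use tau in simp)
    then show ?thesis using H[of n] ztau[of n] by simp
  qed
  define K2 where "K2 = {x\<in>K. V x \<in> {..c/2}}"
  have cK2: "compact K2" unfolding K2_def
    by (rule compact_sub[OF cK continuous_on_subset[OF Vcont KU]]) simp
  have "pn n \<in> K2" for n using pnV[of n] Vnn c2 unfolding K2_def K_def by auto
  then obtain p r where p: "p \<in> K2" "strict_mono r" "(pn \<circ> r) \<longlonglongrightarrow> p"
    using seq_compactE[OF compact_imp_seq_compact[OF cK2], of pn] by blast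
  have pU: "p \<in> U" and pc: "V p \<le> c/2" using p(1) by (auto simp: K2_def K_def)
  obtain y where y: "is_solution U F p y" using existence[OF pU] pc cpos by auto
  have win: "norm (zs (r n) \<tau> - y \<tau>) \<le> 2 * norm (pn (r n) - p)" for n
    using window[OF LF(2) LF(1) tau zsol[of "r n"] _ y] pnV[of "r n"] pc c2 by auto
  have lim1: "(\<lambda>n. zs (r n) \<tau>) \<longlonglongrightarrow> y \<tau>"
  proof -
    have "(\<lambda>n. pn (r n) - p) \<longlonglongrightarrow> 0" using LIM_zero[OF p(3)[unfolded o_def]] .
    then have "(\<lambda>n. norm (pn (r n) - p)) \<longlonglongrightarrow> 0" by (rule tendsto_norm_zero)
    then have g0: "(\<lambda>n. 2 * norm (pn (r n) - p)) \<longlonglongrightarrow> 0" by (rule tendsto_mult_right_zero)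
    have ev: "\<forall>\<^sub>F n in sequentially. norm (zs (r n) \<tau> - y \<tau>) \<le> 2 * norm (pn (r n) - p)"
      using win by simp
    have "(\<lambda>n. zs (r n) \<tau> - y \<tau>) \<longlonglongrightarrow> 0" by (rule Lim_null_comparison[OF ev g0])
    then show ?thesis by (simp add: LIM_zero_iff)
  qed
  have yU: "y \<tau> \<in> U" using y tau by (simp add: is_solution_def)
  have Vat: "isCont V q" if "q \<in> U" for q
    using Vcont opn that continuous_on_eq_continuous_at by blast
  have limV1: "(\<lambda>n. V (zs (r n) \<tau>)) \<longlonglongrightarrow> V (y \<tau>)"
    using isCont_tendsto_compose[OF Vat[OF yU] lim1] .
  have limV2: "(\<lambda>n. V (pn (r n))) \<longlonglongrightarrow> V p"
    using isCont_tendsto_compose[OF Vat[OF pU] p(3)[unfolded o_def]] .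
  have Vpeta: "\<eta> \<le> V p"
  proof (rule LIMSEQ_le_const[OF limV2], intro exI allI impI)
    fix n show "\<eta> \<le> V (pn (r n))"
    proof -
      have "V (zs (r n) \<tau>) \<le> V (zs (r n) 0)" using V_mono[OF zsol[of "r n"], of 0 \<tau>] tau by simp
      also have "zs (r n) 0 = pn (r n)" by (simp add: zs_def pn_def)
      finally show ?thesis using zeta[of "r n"] by simp
    qed
  qed
  have "V p - V (y \<tau>) \<le> 0"
  proof (rule LIMSEQ_le)
    show "(\<lambda>n. V (pn (r n)) - V (zs (r n) \<tau>)) \<longlonglongrightarrow> V p - V (y \<tau>)"
      using tendsto_diff[OF limV2 limV1] .
    show "(\<lambda>n. (c/2) * inverse (real (Suc n))) \<longlonglongrightarrow> 0"
      by (rule tendsto_mult_right_zero[OF LIMSEQ_inverse_real_of_nat])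
    show "\<exists>N. \<forall>n\<ge>N. V (pn (r n)) - V (zs (r n) \<tau>) \<le> (c/2) * inverse (real (Suc n))"
    proof (intro exI allI impI)
      fix n :: nat
      have "n \<le> r n" using seq_suble[OF p(2)] .
      then have "(c/2) / real (Suc (r n)) \<le> (c/2) / real (Suc n)"
        using cpos by (intro divide_left_mono) simp_all
      then show "V (pn (r n)) - V (zs (r n) \<tau>) \<le> (c/2) * inverse (real (Suc n))"
        using drop[of "r n"] unfolding divide_inverse by linarith
    qed
  qed
  moreover have y0: "y 0 = p" using y by (simp add: is_solution_def)
  have Vconst: "V (y s) = V p" if s: "s \<in> {0..\<tau>}" for s
  proof -
    have "V (y s) \<le> V (y 0)" using V_mono[OF y, of 0 s] s by simp
    moreover have "V (y \<tau>) \<le> V (y s)" using V_mono[OF y, of s \<tau>] s by simp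
    ultimately show ?thesis using \<open>V p - V (y \<tau>) \<le> 0\<close> y0 by simp
  qed
  have "\<forall>s\<in>{0..\<tau>}. grad V (y s) = 0"
  proof
    fix s assume s: "s \<in> {0..\<tau>}"
    have ys: "y s \<in> U" "(y has_vector_derivative F (y s)) (at s within {0..})"
      using y s by (auto simp: is_solution_def)
    have d1: "((\<lambda>s. V (y s)) has_vector_derivative (- (norm (grad V (y s)))\<^sup>2)) (at s within {0..\<tau>})"
      using V_deriv[OF ys] by (rule has_vector_derivative_within_subset) auto
    have d2: "((\<lambda>s. V (y s)) has_vector_derivative 0) (at s within {0..\<tau>})"
      by (rule has_vector_derivative_transform[OF s _ has_vector_derivative_const[of "V p"]])
        (use Vconst in auto)
    have "- (norm (grad V (y s)))\<^sup>2 = 0"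
      by (rule vector_derivative_unique_within_closed_interval[of 0 \<tau> s "\<lambda>s. V (y s)"])
        (use tau s d1 d2 in auto)
    then show "grad V (y s) = 0" by simp
  qed
  from crit[OF pU _ tau(1) y this] pc c2 have "V p = 0" by simp
  then show False using Vpeta eta by simp
qed

end

context lsys begin

lemma eta_of_eps:
  assumes "\<epsilon> > 0"
  obtains \<eta> where "\<eta> > 0" "\<And>x. x \<in> K \<Longrightarrow> V x < \<eta> \<Longrightarrow> infdist x L < \<epsilon>"
proof -
  define S where "S = K \<inter> {x. \<epsilon> \<le> infdist x L}"
  have cS: "compact S" unfolding S_def
    by (rule compact_Int_closed[OF cK]) (intro closed_Collect_le continuous_intros continuous_on_id)
  show ?thesis
  proof (cases "S = {}")
    case True
    show ?thesis by (rule that[of 1]) (use True in \<open>auto simp: S_def not_le\<close>)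
  next
    case False
    obtain q where q: "q \<in> S" "\<And>z. z \<in> S \<Longrightarrow> V q \<le> V z"
      using continuous_attains_inf[OF cS False continuous_on_subset[OF Vcont]] KU
      by (auto simp: S_def)
    have "V q \<noteq> 0"
    proof
      assume "V q = 0"
      then have "q \<in> L" using q(1) by (auto simp: S_def K_def L_def)
      then have "infdist q L = 0" by simp
      then show False using q(1) assms by (simp add: S_def)
    qed
    then have qpos: "V q > 0" using q(1) Vnn KU by (force simp: S_def)
    show ?thesis
    proof (rule that[OF qpos])
      fix x assume "x \<in> K" "V x < V q"
      then show "infdist x L < \<epsilon>" using q(2)[of x] by (force simp: S_def)
    qed
  qed
qed

lemma delta_of_eta:
  assumes "\<eta> > 0"
  obtains \<delta> where "\<delta> > 0" "\<And>x. x \<in> nbhd L \<delta> \<Longrightarrow> x \<in> U \<and> V x < \<eta>"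
proof -
  define Ob where "Ob = V -` {..<\<eta>} \<inter> U"
  have "\<forall>B. open B \<longrightarrow> open (V -` B \<inter> U)" using continuous_on_open_vimage[OF opn, of V] Vcont by blast
  then have oO: "open Ob" unfolding Ob_def by simp
  have LO: "L \<subseteq> Ob" using assms by (auto simp: L_def Ob_def)
  obtain e where e: "e > 0" "\<And>a. a \<in> L \<Longrightarrow> ball a e \<subseteq> Ob"
    using compact_ball_cover[OF cL oO LO] by blast
  show ?thesis
  proof (rule that[OF e(1)])
    fix x assume "x \<in> nbhd L e"
    then have xe: "infdist x L < e" by (simp add: nbhd_def)
    obtain a where a: "a \<in> L" "infdist x L = dist x a"
      using infdist_attains_inf[OF compact_imp_closed[OF cL] Lne'] by blast
    have "x \<in> ball a e" using xe a by (simp add: dist_commute)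
    then have "x \<in> Ob" using e(2)[OF a(1)] by blast
    then show "x \<in> U \<and> V x < \<eta>" by (simp add: Ob_def)
  qed
qed

lemma main:
  assumes crit: "\<And>p y \<tau>. p \<in> U \<Longrightarrow> V p \<le> c \<Longrightarrow> \<tau> > 0 \<Longrightarrow> is_solution U F p y
      \<Longrightarrow> (\<forall>s\<in>{0..\<tau>}. grad V (y s) = 0) \<Longrightarrow> V p = 0"
  shows "unif_asym_stable U F L"
proof -
  have c2: "c/2 > 0" "c/2 < c" using cpos by auto
  have inN: "x \<in> nbhd L \<epsilon>" if "x \<in> K" "V x < \<eta>" "\<And>x. x \<in> K \<Longrightarrow> V x < \<eta> \<Longrightarrow> infdist x L < \<epsilon>"
    for x \<eta> \<epsilon> using that by (simp add: nbhd_def)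
  have pos: "pos_invariant U F L"
    unfolding pos_invariant_def
  proof (intro ballI conjI allI impI)
    fix x0 assume x0: "x0 \<in> L"
    then have x0': "x0 \<in> U" "V x0 = 0" by (auto simp: L_def)
    show "\<exists>x. is_solution U F x0 x" using existence[of x0] x0' cpos by simp
    fix x t assume "is_solution U F x0 x" "(0::real) \<le> t"
    from sol_in_K[OF this] x0' cpos have "x t \<in> K" "V (x t) \<le> 0" by auto
    then show "x t \<in> L" using Vnn by (force simp: K_def L_def)
  qed
  have stab: "unif_stable U F L"
    unfolding unif_stable_def
  proof (intro allI impI)
    fix \<epsilon> :: real assume "\<epsilon> > 0"
    obtain \<eta> where eta: "\<eta> > 0" "\<And>x. x \<in> K \<Longrightarrow> V x < \<eta> \<Longrightarrow> infdist x L < \<epsilon>"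
      using eta_of_eps[OF \<open>\<epsilon> > 0\<close>] by blast
    have "min \<eta> (c/2) > 0" using eta c2 by simp
    then obtain \<delta> where d: "\<delta> > 0" "\<And>x. x \<in> nbhd L \<delta> \<Longrightarrow> x \<in> U \<and> V x < min \<eta> (c/2)"
      using delta_of_eta by blast
    show "\<exists>\<delta>>0. \<forall>x0\<in>nbhd L \<delta>. (\<exists>x. is_solution U F x0 x) \<and> (\<forall>x. is_solution U F x0 x \<longrightarrow> (\<forall>t\<ge>0. x t \<in> nbhd L \<epsilon>))"
    proof (rule exI[of _ \<delta>], intro conjI ballI allI impI)
      show "\<delta> > 0" by (rule d(1))
      fix x0 assume "x0 \<in> nbhd L \<delta>"
      then have x0: "x0 \<in> U" "V x0 < \<eta>" "V x0 < c/2" using d(2) by auto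
      show "\<exists>x. is_solution U F x0 x" using existence[of x0] x0 c2 by simp
      fix x t assume "is_solution U F x0 x" "(0::real) \<le> t"
      from sol_in_K[OF this] x0 c2 have "x t \<in> K" "V (x t) < \<eta>" by auto
      then show "x t \<in> nbhd L \<epsilon>" using eta(2) by (simp add: nbhd_def)
    qed
  qed
  obtain \<delta>0 where d0: "\<delta>0 > 0" "\<And>x. x \<in> nbhd L \<delta>0 \<Longrightarrow> x \<in> U \<and> V x < c/2"
    using delta_of_eta[OF c2(1)] by blast
  have "\<exists>\<delta>0>0. (\<forall>x0\<in>nbhd L \<delta>0. \<exists>x. is_solution U F x0 x) \<and>
        (\<forall>\<epsilon>>0. \<exists>T>0. \<forall>x0\<in>nbhd L \<delta>0. \<forall>x. is_solution U F x0 x \<longrightarrow> (\<forall>t\<ge>T. x t \<in> nbhd L \<epsilon>))"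
  proof (rule exI[of _ \<delta>0], intro conjI ballI allI impI)
    show "\<delta>0 > 0" by (rule d0(1))
    fix x0 assume "x0 \<in> nbhd L \<delta>0"
    then show "\<exists>x. is_solution U F x0 x" using existence[of x0] d0(2) c2 by force
  next
    fix \<epsilon> :: real assume "\<epsilon> > 0"
    obtain \<eta> where eta: "\<eta> > 0" "\<And>x. x \<in> K \<Longrightarrow> V x < \<eta> \<Longrightarrow> infdist x L < \<epsilon>"
      using eta_of_eps[OF \<open>\<epsilon> > 0\<close>] by blast
    obtain T where T: "T > 0" "\<And>x0 x. x0 \<in> U \<Longrightarrow> V x0 \<le> c/2 \<Longrightarrow> is_solution U F x0 x \<Longrightarrow> V (x T) < \<eta>"
    proof -
      have "\<exists>T>0. \<forall>x0 x. x0 \<in> U \<longrightarrow> V x0 \<le> c/2 \<longrightarrow> is_solution U F x0 x \<longrightarrow> V (x T) < \<eta>"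
        by (rule attract[OF _ eta(1)]) (rule crit; assumption)
      then show ?thesis using that by blast
    qed
    show "\<exists>T>0. \<forall>x0\<in>nbhd L \<delta>0. \<forall>x. is_solution U F x0 x \<longrightarrow> (\<forall>t\<ge>T. x t \<in> nbhd L \<epsilon>)"
    proof (rule exI[of _ T], intro conjI ballI allI impI)
      show "T > 0" by (rule T(1))
      fix x0 x t assume x0: "x0 \<in> nbhd L \<delta>0" and s: "is_solution U F x0 x" and t: "T \<le> t"
      have x0': "x0 \<in> U" "V x0 \<le> c/2" using d0(2)[OF x0] by auto
      have "V (x t) \<le> V (x T)" using V_mono[OF s _ t] T(1) by simp
      also have "\<dots> < \<eta>" using T(2)[OF x0' s] .
      finally have "V (x t) < \<eta>" .
      moreover have "x t \<in> K" using sol_in_K(1)[OF s _ ] x0' c2 t T(1) by simp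
      ultimately show "x t \<in> nbhd L \<epsilon>" using eta(2) by (simp add: nbhd_def)
    qed
  qed
  then show ?thesis using pos stab by (simp add: unif_asym_stable_def)
qed

end

lemma grad_inner_Basis:
  assumes "i \<in> Basis"
  shows "grad f x \<bullet> i = pderiv_at f i x"
  using assms by (simp add: grad_def inner_sum_left inner_Basis if_distrib sum.delta cong: if_cong)

lemma lie_Suc_eq:
  "lie_iter X (Suc k) g = (\<lambda>x. \<Sum>i\<in>Basis. (X x \<bullet> i) * pderiv_at (lie_iter X k g) i x)"
  by (rule ext) (simp add: grad_def inner_sum_right mult.commute)

lemma smooth_lie:
  assumes "open U" "smooth_on U X" "smooth_on U g"
  shows "smooth_on U (lie_iter X k g)"
proof (induction k)
  case 0
  then show ?case using assms by simp
next
  case (Suc k)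
  show ?case
    unfolding smooth_on_def lie_Suc_eq
  proof
    fix m
    show "Ck_on m U (\<lambda>x. \<Sum>i\<in>Basis. (X x \<bullet> i) * pderiv_at (lie_iter X k g) i x)"
    proof (rule Ck_on_sum[OF assms(1) finite_Basis])
      fix i :: 'a assume i: "i \<in> Basis"
      have a: "Ck_on m U (\<lambda>x. X x \<bullet> i)"
        using Ck_on_bilinear[OF assms(1) bounded_bilinear_inner, of m X "\<lambda>x. i"] assms(2) Ck_on_const[of m U i]
        by (simp add: smooth_on_def)
      have "Ck_on (Suc m) U (lie_iter X k g)" using Suc.IH by (simp add: smooth_on_def)
      then have b: "Ck_on m U (\<lambda>x. pderiv_at (lie_iter X k g) i x)" using i by simp
      show "Ck_on m U (\<lambda>x. (X x \<bullet> i) * pderiv_at (lie_iter X k g) i x)"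
        using Ck_on_bilinear[OF assms(1) bounded_bilinear_mult a b] .
    qed
  qed
qed

theorem lemma8:
  fixes U :: "'a::euclidean_space set" and X :: "'a \<Rightarrow> 'a" and V :: "'a \<Rightarrow> real" and c :: real
  assumes "open U"
    and "Ck_on 1 U X"
    and "Ck_on 2 U V"
    and A1: "\<forall>x\<in>U. V x \<ge> 0" "{x\<in>U. V x = 0} \<noteq> {}" "\<forall>x\<in>U. grad V x \<bullet> X x = 0"
    and A2: "c > 0" "compact {x\<in>U. V x \<in> {0..c}}"
    and A3_or_A3': "{x\<in>U. V x \<in> {0..c} \<and> grad V x = 0} = {x\<in>U. V x = 0}
       \<or> (smooth_on U X \<and> smooth_on U V \<and>
          {x\<in>U. \<forall>k. \<forall>i\<in>Basis. lie_iter X k (\<lambda>y. pderiv_at V i y) x = 0} \<inter> {x\<in>U. V x \<in> {0..c}}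
            \<subseteq> {x\<in>U. V x = 0})"
  shows "unif_asym_stable U (\<lambda>x. X x - grad V x) {x\<in>U. V x = 0}"
proof -
  interpret lsys U X V c
    by (unfold_locales) (use assms in auto)
  have Feq: "(\<lambda>x. X x - grad V x) = F" by (simp add: F_def[abs_def])
  have Leq: "{x\<in>U. V x = 0} = L" by (simp add: L_def)
  have crit: "V p = 0" if p: "p \<in> U" "V p \<le> c" "\<tau> > 0" "is_solution U F p y"
      "\<forall>s\<in>{0..\<tau>}. grad V (y s) = 0" for p y \<tau>
  proof -
    have y0: "y 0 = p" using p(4) by (simp add: is_solution_def)
    have g0: "grad V p = 0" using p(5) p(3) y0 by force
    have Vp: "V p \<in> {0..c}" using p A1(1) by auto
    from A3_or_A3' show ?thesis
    proof
      assume "{x\<in>U. V x \<in> {0..c} \<and> grad V x = 0} = {x\<in>U. V x = 0}"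
      then show ?thesis using p(1) Vp g0 by blast
    next
      assume A3': "smooth_on U X \<and> smooth_on U V \<and>
          {x\<in>U. \<forall>k. \<forall>i\<in>Basis. lie_iter X k (\<lambda>y. pderiv_at V i y) x = 0} \<inter> {x\<in>U. V x \<in> {0..c}}
            \<subseteq> {x\<in>U. V x = 0}"
      have ydX: "(y has_vector_derivative X (y s)) (at s within {0..\<tau>})" if s: "s \<in> {0..\<tau>}" for s
      proof -
        have "(y has_vector_derivative F (y s)) (at s within {0..})" using p(4) s by (simp add: is_solution_def)
        moreover have "F (y s) = X (y s)" using p(5) s by (simp add: F_def)
        ultimately show ?thesis by (auto intro: has_vector_derivative_within_subset)
      qed
      have yU: "y s \<in> U" if "s \<ge> 0" for s using p(4) that by (simp add: is_solution_def)
      have lie0: "\<forall>s\<in>{0..\<tau>}. lie_iter X k (\<lambda>y. pderiv_at V i y) (y s) = 0" if i: "i \<in> Basis" for i k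
      proof (induction k)
        case 0
        show ?case using p(5) grad_inner_Basis[OF i, of V, symmetric] by simp
      next
        case (Suc k)
        define h where "h = lie_iter X k (\<lambda>y. pderiv_at V i y)"
        have "Ck_on m U (\<lambda>y. pderiv_at V i y)" for m
        proof -
          from A3' have "Ck_on (Suc m) U V" by (simp add: smooth_on_def)
          then show ?thesis using i by simp
        qed
        then have smg: "smooth_on U (\<lambda>y. pderiv_at V i y)" by (simp add: smooth_on_def)
        have smh: "smooth_on U h" unfolding h_def by (rule smooth_lie[OF assms(1)]) (use A3' smg in auto)
        show ?case
        proof
          fix s assume s: "s \<in> {0..\<tau>}"
          have hd: "h differentiable (at (y s))"
            using smh yU[of s] s unfolding smooth_on_def by (metis Ck_on.simps(2) One_nat_def atLeastAtMost_iff)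
          have d1: "((\<lambda>s. h (y s)) has_vector_derivative (X (y s) \<bullet> grad h (y s))) (at s within {0..\<tau>})"
            by (rule chain_grad[OF ydX[OF s] hd])
          have d2: "((\<lambda>s. h (y s)) has_vector_derivative 0) (at s within {0..\<tau>})"
            by (rule has_vector_derivative_transform[OF s _ has_vector_derivative_const[of 0]])
              (use Suc.IH in \<open>simp add: h_def\<close>)
          have "X (y s) \<bullet> grad h (y s) = 0"
            by (rule vector_derivative_unique_within_closed_interval[of 0 \<tau> s "\<lambda>s. h (y s)"])
              (use p(3) s d1 d2 in auto)
          then show "lie_iter X (Suc k) (\<lambda>y. pderiv_at V i y) (y s) = 0" by (simp add: h_def)
        qed
      qed
      have "p \<in> {x\<in>U. \<forall>k. \<forall>i\<in>Basis. lie_iter X k (\<lambda>y. pderiv_at V i y) x = 0}"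
        using lie0 p(1) p(3) y0 by force
      then show ?thesis using A3' p(1) Vp by blast
    qed
  qed
  have "unif_asym_stable U F L" by (rule main) (rule crit; assumption)
  then show ?thesis by (simp add: Feq Leq)
qed


end
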